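(* Let $\alpha(x)$ and $\beta(x)$ be real rational functions each of the form \[x-\tau_0-\sum_{m=1}^{M}\frac{\lambda_m}{x-\tau_m}\] with finitely many terms, real numbers $\tau_m$, and real $\lambda_m>0$ (depending on the function). Assume that at least one of $\alpha,\beta$ has at least one pole. Let $\lambda>0$ and $\theta\in\mathbb{R}$. If $\beta(\theta)=0$ and $\theta$ is not a pole of $\alpha$, then there exists $\theta'\in(\theta-\sqrt{\lambda},\theta+\sqrt{\lambda})$ such that $\beta(\theta')$ is neither $0$ nor a pole, and $\alpha(\theta')-\frac{\lambda}{\beta(\theta')}=0$. *)

theory Defs
  imports Complex_Main
begin

definition rf :: "real \<Rightarrow> (real \<times> real) list \<Rightarrow> real \<Rightarrow> real" where
  "rf t0 ps x = x - t0 - (\<Sum>(l, t)\<leftarrow>ps. l / (x - t))"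

definition admissible :: "(real \<times> real) list \<Rightarrow> bool" where
  "admissible ps \<longleftrightarrow> (\<forall>(l, t) \<in> set ps. l > 0)"

text \<open>Poles of rf t0 ps (the points t_m; since all l_m > 0 these are genuine poles).\<close>
definition poles :: "(real \<times> real) list \<Rightarrow> real set" where
  "poles ps = snd ` set ps"

end

theory Submission
  imports Defs
begin

lemma sum_list_ge_mem:
  fixes f :: "'a \<Rightarrow> real"
  assumes "\<forall>z\<in>set xs. 0 \<le> f z" and "z \<in> set xs"
  shows "f z \<le> sum_list (map f xs)"
  using assms
proof (induction xs)
  case Nil then show ?case by simp
next
  case (Cons a xs)
  have "0 \<le> sum_list (map f xs)" using Cons.prems(1) by (intro sum_list_nonneg) auto
  then show ?case using Cons by auto
qed

lemma term_pos:
  fixes l x y t :: real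
  assumes "l > 0" "x < y" "t \<notin> {x..y}"
  shows "l/(x-t) - l/(y-t) > 0"
proof (cases "t < x")
  case True
  then have "l/(y-t) < l/(x-t)" using assms by (intro divide_strict_left_mono) auto
  then show ?thesis by simp
next
  case False
  then have "t > y" using assms by auto
  then have "l/(t-x) < l/(t-y)" using assms by (intro divide_strict_left_mono) auto
  then have "l/(x-t) > l/(y-t)"
    by (metis minus_diff_eq divide_minus_right neg_less_iff_less)
  then show ?thesis by simp
qed

lemma rf_diff:
  "rf a ps y - rf a ps x = (y - x) + (\<Sum>(l,t)\<leftarrow>ps. l/(x-t) - l/(y-t))"
  by (induction ps) (auto simp: rf_def algebra_simps)

lemma terms_nonneg:
  assumes "admissible ps" "x < y" "\<forall>t\<in>poles ps. t \<notin> {x..y}"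
  shows "\<forall>z\<in>set ps. 0 < (case z of (l,t) \<Rightarrow> l/(x-t) - l/(y-t))"
  using assms term_pos unfolding admissible_def poles_def by fastforce

lemma rf_mono:
  assumes "admissible ps" "x < y" "\<forall>t\<in>poles ps. t \<notin> {x..y}"
  shows "rf a ps y - rf a ps x \<ge> y - x"
    and "ps \<noteq> [] \<Longrightarrow> rf a ps y - rf a ps x > y - x"
proof -
  have tn: "\<forall>z\<in>set ps. 0 < (case z of (l,t) \<Rightarrow> l/(x-t) - l/(y-t))"
    using terms_nonneg[OF assms] .
  have "0 \<le> (\<Sum>(l,t)\<leftarrow>ps. l/(x-t) - l/(y-t))"
    using tn by (intro sum_list_nonneg) auto
  then show "rf a ps y - rf a ps x \<ge> y - x" by (simp add: rf_diff)
  assume "ps \<noteq> []"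
  then obtain z where z: "z \<in> set ps" by (cases ps) auto
  have "0 < (case z of (l,t) \<Rightarrow> l/(x-t) - l/(y-t))" using tn z by auto
  also have "\<dots> \<le> (\<Sum>(l,t)\<leftarrow>ps. l/(x-t) - l/(y-t))"
    using tn z by (intro sum_list_ge_mem) auto
  finally show "rf a ps y - rf a ps x > y - x" by (simp add: rf_diff)
qed

lemma rf_pole_bound:
  assumes "admissible ps" "x < y" "\<forall>t\<in>poles ps. t \<notin> {x..y}" "(l,p) \<in> set ps"
  shows "rf a ps y - rf a ps x \<ge> l/(x-p) - l/(y-p)"
proof -
  have tn: "\<forall>z\<in>set ps. 0 < (case z of (l,t) \<Rightarrow> l/(x-t) - l/(y-t))"
    using terms_nonneg[OF assms(1-3)] .
  have "l/(x-p) - l/(y-p) = (case (l,p) of (l,t) \<Rightarrow> l/(x-t) - l/(y-t))" by simp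
  also have "\<dots> \<le> (\<Sum>(l,t)\<leftarrow>ps. l/(x-t) - l/(y-t))"
    using tn assms(4) by (intro sum_list_ge_mem) auto
  finally show ?thesis using assms(2) by (simp add: rf_diff)
qed

lemma sum_cont:
  assumes "\<forall>t\<in>poles ps. t \<notin> S"
  shows "continuous_on S (\<lambda>x. \<Sum>(l,t)\<leftarrow>ps. l/(x-t))"
  using assms
proof (induction ps)
  case Nil then show ?case by simp
next
  case (Cons z ps)
  obtain l t where z: "z = (l,t)" by fastforce
  have "t \<notin> S" using Cons.prems z by (auto simp: poles_def)
  then have c1: "continuous_on S (\<lambda>x. l/(x-t))"
    by (intro continuous_intros) auto
  have c2: "continuous_on S (\<lambda>x. \<Sum>(l,t)\<leftarrow>ps. l/(x-t))"
    using Cons by (auto simp: poles_def)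
  show ?case using continuous_on_add[OF c1 c2] z by simp
qed

lemma rf_cont:
  assumes "\<forall>t\<in>poles ps. t \<notin> S"
  shows "continuous_on S (rf a ps)"
proof -
  have "continuous_on S (\<lambda>x. x - a - (\<Sum>(l,t)\<leftarrow>ps. l/(x-t)))"
    using sum_cont[OF assms] by (intro continuous_intros)
  then show ?thesis unfolding rf_def[abs_def] by simp
qed

definition refl :: "(real \<times> real) list \<Rightarrow> (real \<times> real) list" where
  "refl ps = map (\<lambda>(l,t). (l, -t)) ps"

lemma neg_div_aux: "(a::real)/(-x-b) = -(a/(b+x))"
proof -
  have "-x-b = -(b+x)" by simp
  then have "a/(-x-b) = a/(-(b+x))" by simp
  also have "\<dots> = -(a/(b+x))" by (rule divide_minus_right)
  finally show ?thesis .
qed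

lemma rf_refl: "rf (-a) (refl ps) x = - rf a ps (-x)"
  by (induction ps) (auto simp: rf_def refl_def algebra_simps neg_div_aux)

lemma poles_refl: "poles (refl ps) = uminus ` poles ps"
  unfolding poles_def refl_def by (force simp: image_iff)

lemma admissible_refl: "admissible ps \<Longrightarrow> admissible (refl ps)"
  unfolding admissible_def refl_def by auto

lemma refl_nil: "refl ps = [] \<longleftrightarrow> ps = []"
  unfolding refl_def by simp

lemma find_c:
  fixes f g :: "real \<Rightarrow> real"
  assumes "l > 0" "\<theta> < p" "lam > 0"
    and "\<And>x. \<theta> < x \<Longrightarrow> x < p \<Longrightarrow> f x \<ge> l/(\<theta>-p) - l/(x-p) \<and> g x \<ge> x - \<theta>"
  shows "\<exists>c. \<theta> < c \<and> c < p \<and> f c * g c > lam"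
proof -
  define D where "D = p - \<theta>"
  have D: "D > 0" using assms D_def by simp
  define K where "K = l/D + 2*lam/D + 1"
  have K: "K > 0" using D assms K_def by (simp add: add_pos_pos)
  define d where "d = min (D/2) (l/K)"
  have d: "d > 0" "d \<le> D/2" "d \<le> l/K" unfolding d_def using D K assms by (auto simp: min_def)
  define c where "c = p - d"
  have c: "\<theta> < c" "c < p" using d D_def c_def by auto
  have "l/d \<ge> K"
  proof -
    have "d * K \<le> l" using d K by (simp add: field_simps)
    then show ?thesis using d by (simp add: field_simps)
  qed
  have "\<theta>-p = -D" "c-p = -d" using D_def c_def by auto
  then have e1: "l/(\<theta>-p) - l/(c-p) = l/d - l/D" by simp
  have f: "f c \<ge> 2*lam/D + 1" using assms(4)[OF c] e1 \<open>l/d \<ge> K\<close> K_def by linarith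
  have g: "g c \<ge> D/2" using assms(4)[OF c] d c_def D_def by linarith
  have "0 \<le> 2*lam/D" using D assms(3) by simp
  then have fc0: "0 \<le> f c" using f by linarith
  have "(2*lam/D + 1) * (D/2) \<le> f c * g c"
    by (rule mult_mono[OF f g fc0]) (use D in simp)
  moreover have "(2*lam/D + 1) * (D/2) = lam + D/2" using D by (simp add: field_simps)
  ultimately show ?thesis using c D by (intro exI[of _ c]) auto
qed


lemma right_case:
  assumes ap: "admissible ps" and aq: "admissible qs" and ne: "ps \<noteq> [] \<or> qs \<noteq> []"
    and lam: "lam > 0" and tp: "\<theta> \<notin> poles ps" and tq: "\<theta> \<notin> poles qs"
    and b0: "rf b qs \<theta> = 0" and a0: "rf a ps \<theta> \<ge> 0"
  shows "\<exists>x. \<theta> < x \<and> x < \<theta> + sqrt lam \<and> x \<notin> poles ps \<and> x \<notin> poles qs \<and>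
           rf b qs x > 0 \<and> rf a ps x * rf b qs x = lam"
proof -
  define h where "h x = rf a ps x * rf b qs x - lam" for x
  define Q where "Q = poles ps \<union> poles qs"
  define s where "s = sqrt lam"
  have s: "s > 0" "s * s = lam" using lam s_def by auto
  have finQ: "finite Q" by (simp add: Q_def poles_def)
  have tQ: "\<theta> \<notin> Q" using tp tq Q_def by auto
  have lb: "rf a ps x \<ge> x - \<theta> \<and> rf b qs x \<ge> x - \<theta> \<and> (rf a ps x > x - \<theta> \<or> rf b qs x > x - \<theta>)"
    if "\<theta> < x" "\<forall>t\<in>Q. t \<notin> {\<theta>..x}" for x
  proof -
    have p1: "\<forall>t\<in>poles ps. t \<notin> {\<theta>..x}" and p2: "\<forall>t\<in>poles qs. t \<notin> {\<theta>..x}"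
      using that Q_def by auto
    show ?thesis
      using rf_mono[OF ap that(1) p1, of a] rf_mono[OF aq that(1) p2, of b] a0 b0 ne by auto
  qed
  have ivt: "\<exists>x. \<theta> < x \<and> x < c \<and> h x = 0"
    if c: "\<theta> < c" "\<forall>t\<in>Q. t \<notin> {\<theta>..c}" "h c > 0" for c
  proof -
    have "continuous_on {\<theta>..c} (rf a ps)" "continuous_on {\<theta>..c} (rf b qs)"
      using c(2) Q_def by (auto intro!: rf_cont)
    then have hc: "continuous_on {\<theta>..c} h" unfolding h_def[abs_def]
      by (intro continuous_intros)
    have h0: "h \<theta> = - lam" using b0 h_def by simp
    obtain x where x: "x \<ge> \<theta>" "x \<le> c" "h x = 0"
      using IVT'[of h \<theta> 0 c, OF _ _ _ hc] h0 lam c by auto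
    have "x \<noteq> \<theta>" using x h0 lam by auto
    moreover have "x \<noteq> c" using x c by auto
    ultimately show ?thesis using x by (intro exI[of _ x]) auto
  qed
  have main: "\<exists>c. \<theta> < c \<and> c \<le> \<theta> + s \<and> (\<forall>t\<in>Q. t \<notin> {\<theta>..c}) \<and> h c > 0"
  proof (cases "Q \<inter> {\<theta><..\<theta>+s} = {}")
    case True
    have nq: "\<forall>t\<in>Q. t \<notin> {\<theta>..\<theta>+s}" using True tQ
      by (metis Int_iff atLeastAtMost_iff disjoint_iff greaterThanAtMost_iff order_le_less)
    have l: "rf a ps (\<theta>+s) \<ge> s" "rf b qs (\<theta>+s) \<ge> s"
      "rf a ps (\<theta>+s) > s \<or> rf b qs (\<theta>+s) > s"
      using lb[of "\<theta>+s"] nq s by auto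
    have "s * s < rf a ps (\<theta>+s) * rf b qs (\<theta>+s)"
    proof (cases "rf a ps (\<theta>+s) > s")
      case True
      have "s * s < rf a ps (\<theta>+s) * s" using True s(1) by (intro mult_strict_right_mono)
      also have "\<dots> \<le> rf a ps (\<theta>+s) * rf b qs (\<theta>+s)" using l s(1) True by (intro mult_left_mono) auto
      finally show ?thesis .
    next
      case False
      then have B: "rf b qs (\<theta>+s) > s" using l by auto
      have "s * s < s * rf b qs (\<theta>+s)" using B s(1) by (intro mult_strict_left_mono)
      also have "\<dots> \<le> rf a ps (\<theta>+s) * rf b qs (\<theta>+s)" using l s B
        by (intro mult_right_mono) auto
      finally show ?thesis .
    qed
    then have "h (\<theta>+s) > 0" using s h_def by simp
    then show ?thesis using nq s by (intro exI[of _ "\<theta>+s"]) auto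
  next
    case False
    define P where "P = Q \<inter> {\<theta><..\<theta>+s}"
    have finP: "finite P" using finQ P_def by simp
    define p where "p = Min P"
    have pP: "p \<in> P" unfolding p_def using False finP P_def by (intro Min_in) auto
    have pmin: "\<And>t. t \<in> P \<Longrightarrow> p \<le> t" using finP p_def by simp
    have tp': "\<theta> < p" "p \<le> \<theta> + s" "p \<in> Q" using pP P_def by auto
    have nq: "\<forall>t\<in>Q. t \<notin> {\<theta>..x}" if "\<theta> < x" "x < p" for x
    proof (intro ballI notI)
      fix t assume t: "t \<in> Q" "t \<in> {\<theta>..x}"
      then have "t \<noteq> \<theta>" using tQ by auto
      then have "t \<in> P" using t that tp' P_def by auto
      then show False using pmin[of t] t that by auto
    qed
    have np1: "\<forall>t\<in>poles ps. t \<notin> {\<theta>..x}" and np2: "\<forall>t\<in>poles qs. t \<notin> {\<theta>..x}"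
      if "\<theta> < x" "x < p" for x using nq[OF that] Q_def by auto
    have "\<exists>c. \<theta> < c \<and> c < p \<and> h c > 0"
    proof (cases "p \<in> poles ps")
      case True
      then obtain l where l: "(l,p) \<in> set ps" unfolding poles_def by force
      have l0: "l > 0" using ap l unfolding admissible_def by auto
      have "\<exists>c. \<theta> < c \<and> c < p \<and> rf a ps c * rf b qs c > lam"
      proof (rule find_c[OF l0 tp'(1) lam])
        fix x assume x: "\<theta> < x" "x < p"
        show "l/(\<theta>-p) - l/(x-p) \<le> rf a ps x \<and> x - \<theta> \<le> rf b qs x"
          using rf_pole_bound[OF ap x(1) np1[OF x] l, of a] a0 lb[OF x(1) nq[OF x]] by auto
      qed
      then show ?thesis using h_def by auto
    next
      case False
      then have "p \<in> poles qs" using tp' Q_def by auto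
      then obtain l where l: "(l,p) \<in> set qs" unfolding poles_def by force
      have l0: "l > 0" using aq l unfolding admissible_def by auto
      have "\<exists>c. \<theta> < c \<and> c < p \<and> rf b qs c * rf a ps c > lam"
      proof (rule find_c[OF l0 tp'(1) lam])
        fix x assume x: "\<theta> < x" "x < p"
        show "l/(\<theta>-p) - l/(x-p) \<le> rf b qs x \<and> x - \<theta> \<le> rf a ps x"
          using rf_pole_bound[OF aq x(1) np2[OF x] l, of b] b0 lb[OF x(1) nq[OF x]] by auto
      qed
      then show ?thesis using h_def by (auto simp: mult.commute)
    qed
    then obtain c where "\<theta> < c" "c < p" "h c > 0" by blast
    then show ?thesis using nq tp' by (intro exI[of _ c]) auto
  qed
  then obtain c where c: "\<theta> < c" "c \<le> \<theta> + s" "\<forall>t\<in>Q. t \<notin> {\<theta>..c}" "h c > 0" by blast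
  obtain x where x: "\<theta> < x" "x < c" "h x = 0" using ivt[OF c(1,3,4)] by blast
  have nx: "\<forall>t\<in>Q. t \<notin> {\<theta>..x}" using c(3) x by auto
  have "rf b qs x > 0" using lb[OF x(1) nx] x by auto
  moreover have "x \<notin> Q" using c(3) x by auto
  ultimately show ?thesis using x c s_def h_def Q_def by (intro exI[of _ x]) auto
qed


theorem lemma12:
  fixes a0 b0 lam \<theta> :: real and ps qs :: "(real \<times> real) list"
  assumes "admissible ps" and "admissible qs"
    and "poles ps \<union> poles qs \<noteq> {}"
    and "lam > 0"
    and "\<theta> \<notin> poles qs" and "rf b0 qs \<theta> = 0"
    and "\<theta> \<notin> poles ps"
  shows "\<exists>\<theta>'. \<theta>' \<in> {\<theta> - sqrt lam <..< \<theta> + sqrt lam} \<and>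
           \<theta>' \<notin> poles qs \<and> rf b0 qs \<theta>' \<noteq> 0 \<and> \<theta>' \<notin> poles ps \<and>
           rf a0 ps \<theta>' - lam / rf b0 qs \<theta>' = 0"
proof -
  have ne: "ps \<noteq> [] \<or> qs \<noteq> []" using assms(3) unfolding poles_def by auto
  have fin: "rf a0 ps x - lam / rf b0 qs x = 0" if "rf b0 qs x \<noteq> 0" "rf a0 ps x * rf b0 qs x = lam" for x
    using that by (simp add: field_simps)
  show ?thesis
  proof (cases "rf a0 ps \<theta> \<ge> 0")
    case True
    obtain x where x: "\<theta> < x" "x < \<theta> + sqrt lam" "x \<notin> poles ps" "x \<notin> poles qs"
        "rf b0 qs x > 0" "rf a0 ps x * rf b0 qs x = lam"
      using right_case[OF assms(1,2) ne assms(4,7,5,6) True] by blast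
    have "sqrt lam > 0" using assms(4) by simp
    then have "\<theta> - sqrt lam < x" using x(1) by linarith
    then show ?thesis using x fin[of x] by (intro exI[of _ x]) auto
  next
    case False
    have ne': "refl ps \<noteq> [] \<or> refl qs \<noteq> []" using ne refl_nil by auto
    have tp: "-\<theta> \<notin> poles (refl ps)" "-\<theta> \<notin> poles (refl qs)"
      using assms(5,7) by (auto simp: poles_refl)
    have b: "rf (-b0) (refl qs) (-\<theta>) = 0" using assms(6) by (simp add: rf_refl)
    have a: "rf (-a0) (refl ps) (-\<theta>) \<ge> 0" using False by (simp add: rf_refl)
    obtain x where x: "-\<theta> < x" "x < -\<theta> + sqrt lam" "x \<notin> poles (refl ps)" "x \<notin> poles (refl qs)"
        "rf (-b0) (refl qs) x > 0" "rf (-a0) (refl ps) x * rf (-b0) (refl qs) x = lam"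
      using right_case[OF admissible_refl[OF assms(1)] admissible_refl[OF assms(2)] ne' assms(4) tp b a]
      by blast
    have x': "-x \<notin> poles ps" "-x \<notin> poles qs" "rf b0 qs (-x) \<noteq> 0" "rf a0 ps (-x) * rf b0 qs (-x) = lam"
      using x by (auto simp: poles_refl rf_refl image_iff)
    have "sqrt lam > 0" using assms(4) by simp
    then have "\<theta> + sqrt lam > -x" using x(1) by linarith
    then show ?thesis using x x' fin[of "-x"] by (intro exI[of _ "-x"]) auto
  qed
qed

end
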